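(* Let $p$ be a prime, $w\ge1$, $n\ge2$, and $\mu\ge1$ an integer with $2^\mu<p$. Let $C=\{\mathbf x\in\mathbb{F}_{p^w}^n:\sum_{i=1}^nx_i=0\}$ be the code of additive secret sharings of $0$. For any family $\boldsymbol\tau=(\tau^{(1)},\dots,\tau^{(n)})$ with $\tau^{(j)}:\mathbb{F}_{p^w}\to\{0,1\}^\mu$, \[ SD(\boldsymbol\tau(C),\boldsymbol\tau(\mathcal U_n))\le\frac12\cdot2^\mu\cdot c_\mu^{n-2},\qquad c_\mu=\frac{2^\mu\sin(\pi/2^\mu)}{p\sin(\pi/p)}. \]
   Context: For $S\subseteq\mathbb{F}_{p^w}^n$, $\boldsymbol\tau(S)$ is the distribution of $(\tau^{(1)}(x_1),\dots,\tau^{(n)}(x_n))$ with $\mathbf x$ uniform on $S$; $\mathcal U_n=\mathbb{F}_{p^w}^n$; $SD$ denotes statistical distance. *)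

theory Defs
  imports "HOL-Probability.Probability"
begin

text \<open>Vectors in F^n are represented as extensional functions on the index set {..<n}.\<close>

definition vecs :: "nat \<Rightarrow> (nat \<Rightarrow> 'a) set" where
  "vecs n = PiE {..<n} (\<lambda>_. UNIV)"

definition additive_code :: "nat \<Rightarrow> (nat \<Rightarrow> 'a::comm_monoid_add) set" where
  "additive_code n = {x \<in> vecs n. (\<Sum>i<n. x i) = 0}"

definition leak_dist :: "nat \<Rightarrow> (nat \<Rightarrow> 'a \<Rightarrow> 'b) \<Rightarrow> (nat \<Rightarrow> 'a) set \<Rightarrow> 'b list pmf" where
  "leak_dist n \<tau> S = map_pmf (\<lambda>x. map (\<lambda>j. \<tau> j (x j)) [0..<n]) (pmf_of_set S)"

definition stat_dist :: "'b pmf \<Rightarrow> 'b pmf \<Rightarrow> real" where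
  "stat_dist P Q = (1/2) * infsum (\<lambda>y. \<bar>pmf P y - pmf Q y\<bar>) UNIV"

end

theory Submission
  imports Defs "HOL-Library.Cardinality" "HOL-Number_Theory.Residues" "HOL-Computational_Algebra.Polynomial"
begin

lemma sin_tangent:
  fixes x a :: real
  assumes "0 \<le> x" "x \<le> pi" "0 \<le> a" "a \<le> pi"
  shows "sin x \<le> sin a + cos a * (x - a)"
proof (cases "x = a")
  case True then show ?thesis by simp
next
  case False
  show ?thesis
  proof (cases "a < x")
    case True
    obtain z where z: "a < z" "z < x" "sin x - sin a = (x - a) * cos z"
      using MVT2[OF True, of sin cos] by (auto intro: DERIV_sin)
    have "cos z \<le> cos a" using z assms by (intro cos_monotone_0_pi_le) auto
    then have "(x - a) * cos z \<le> (x - a) * cos a" using True by (intro mult_left_mono) auto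
    then show ?thesis using z by (simp add: algebra_simps)
  next
    case F: False
    with False have xa: "x < a" by simp
    obtain z where z: "x < z" "z < a" "sin a - sin x = (a - x) * cos z"
      using MVT2[OF xa, of sin cos] by (auto intro: DERIV_sin)
    have "cos a \<le> cos z" using z assms by (intro cos_monotone_0_pi_le) auto
    then have "(a - x) * cos a \<le> (a - x) * cos z" using xa by (intro mult_left_mono) auto
    then show ?thesis using z by (simp add: algebra_simps)
  qed
qed

lemma tel_cos:
  fixes x d :: real
  shows "2 * sin (d/2) * (\<Sum>i<n. cos (x + real i * d)) = sin (x + (real n - 1/2) * d) - sin (x - d/2)"
proof (induction n)
  case 0 then show ?case by (simp add: algebra_simps)
next
  case (Suc n)
  have e: "2 * sin (d/2) * cos (x + real n * d) = sin (x + (real (Suc n) - 1/2) * d) - sin (x + (real n - 1/2) * d)"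
  proof -
    have gen: "2 * sin b * cos y = sin (y + b) - sin (y - b)" for b y :: real
      by (simp add: sin_add sin_diff algebra_simps)
    have "sin (x + (real (Suc n) - 1/2) * d) = sin ((x + real n * d) + d/2)" by (simp add: algebra_simps)
    moreover have "sin (x + (real n - 1/2) * d) = sin ((x + real n * d) - d/2)" by (simp add: algebra_simps)
    ultimately show ?thesis using gen[of "d/2" "x + real n * d"] by simp
  qed
  show ?case using Suc e by (simp add: algebra_simps)
qed

lemma dec_sum:
  fixes f :: "nat \<Rightarrow> real"
  assumes "\<And>i j. i \<le> j \<Longrightarrow> j < N \<Longrightarrow> f j \<le> f i" "P \<subseteq> {..<N}"
  shows "sum f P \<le> (\<Sum>i<card P. f i)"
  using assms
proof (induction N arbitrary: P)
  case 0 then show ?case by simp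
next
  case (Suc N)
  show ?case
  proof (cases "N \<in> P")
    case False
    then have "P \<subseteq> {..<N}" using Suc.prems using less_Suc_eq by auto
    then show ?thesis using Suc.IH Suc.prems by auto
  next
    case True
    define P' where "P' = P - {N}"
    have P': "P' \<subseteq> {..<N}" using Suc.prems by (auto simp: P'_def)
    have fin: "finite P'" using P' finite_subset by blast
    have finP: "finite P" using Suc.prems(2) finite_subset by blast
    have cP: "card P = Suc (card P')" using card_Suc_Diff1[OF finP True] unfolding P'_def by simp
    have "sum f P = sum f P' + f N" using sum.remove[OF finP True, of f] unfolding P'_def by simp
    also have "sum f P' \<le> (\<Sum>i<card P'. f i)" using Suc.IH[OF _ P'] Suc.prems by auto
    also have "card P' \<le> N" using card_mono[OF _ P'] by auto
    then have "f N \<le> f (card P')" using Suc.prems by auto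
    finally show ?thesis using cP by simp
  qed
qed

lemma cos_shift_int: "cos (x + 2 * pi * of_int n) = cos x"
  using sin_cos_eq_iff by blast

lemma subset_cos_bound:
  fixes p :: nat and K :: "nat set" and \<phi> :: real
  assumes odd: "odd p" and p3: "p \<ge> 3" and K: "K \<subseteq> {..<p}"
  shows "(\<Sum>k\<in>K. cos (2*pi*real k/real p - \<phi>)) \<le> sin (pi * real (card K) / real p) / sin (pi / real p)"
proof -
  have pp: "real p > 0" using p3 by simp
  define s :: int where "s = round (\<phi> * real p / (2*pi))"
  define angp where "angp = \<phi> - 2*pi* of_int s/real p"
  have "\<bar>of_int s - \<phi> * real p / (2*pi)\<bar> \<le> 1/2" unfolding s_def by (rule of_int_round_abs_le)
  moreover have "angp = - ((2*pi/real p) * (of_int s - \<phi> * real p / (2*pi)))"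
    unfolding angp_def using pp by (simp add: field_simps)
  then have "\<bar>angp\<bar> = (2*pi/real p) * \<bar>of_int s - \<phi> * real p / (2*pi)\<bar>"
    using pp by (simp add: abs_mult)
  ultimately have "\<bar>angp\<bar> \<le> (2*pi/real p) * (1/2)" using pp
    by (metis mult_left_mono divide_nonneg_pos less_eq_real_def pi_gt_zero zero_less_numeral mult_pos_pos)
  then have psi: "\<bar>angp\<bar> \<le> pi / real p" by simp
  define h where "h = (p - 1) div 2"
  have ph: "p = 2*h + 1" using odd p3 unfolding h_def by presburger
  define r where "r k = (int k - s + int h) mod int p - int h" for k :: nat
  have r_lo: "- int h \<le> r k" for k unfolding r_def using pp by simp
  have r_hi: "r k \<le> int h" for k
  proof -
    have "(int k - s + int h) mod int p < int p" using pp by simp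
    moreover have "int p = 2 * int h + 1" using ph by simp
    ultimately show ?thesis unfolding r_def by linarith
  qed
  have r_cos: "cos (2*pi*real k/real p - \<phi>) = cos (2*pi* of_int (r k)/real p - angp)" for k
  proof -
    define d where "d = (int k - s + int h) div int p"
    have "int k - s = r k + int p * d" unfolding r_def d_def by (simp add: algebra_simps)
    then have "real k - of_int s = of_int (r k) + real p * of_int d"
      by (metis of_int_add of_int_diff of_int_mult of_int_of_nat_eq)
    then have "2*pi*real k/real p - \<phi> = (2*pi* of_int (r k)/real p - angp) + 2*pi* of_int d"
      unfolding angp_def using pp by (simp add: field_simps)
    then show ?thesis using cos_shift_int by simp
  qed
  have r_inj: "inj_on r {..<p}"
  proof
    fix k1 k2 assume k: "k1 \<in> {..<p}" "k2 \<in> {..<p}" "r k1 = r k2"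
    then have "(int k1 + (int h - s)) mod int p = (int k2 + (int h - s)) mod int p"
      unfolding r_def by (simp add: algebra_simps)
    then have "((int k1 + (int h - s)) + (s - int h)) mod int p = ((int k2 + (int h - s)) + (s - int h)) mod int p"
      by (rule mod_add_cong) simp
    then have "int k1 mod int p = int k2 mod int p" by simp
    then show "k1 = k2" using k by (simp add: zmod_int[symmetric])
  qed
  define F where "F j = cos (2*pi* of_int j/real p - angp)" for j :: int
  define R where "R = r ` K"
  have injK: "inj_on r K" using r_inj K inj_on_subset by blast
  have finK: "finite K" using K finite_subset by blast
  have cR: "card R = card K" unfolding R_def using card_image[OF injK] .
  have "(\<Sum>k\<in>K. cos (2*pi*real k/real p - \<phi>)) = (\<Sum>k\<in>K. F (r k))"
    unfolding F_def using r_cos by simp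
  also have "\<dots> = sum F R" unfolding R_def using sum.reindex[OF injK, of F] by simp
  finally have eq1: "(\<Sum>k\<in>K. cos (2*pi*real k/real p - \<phi>)) = sum F R" .
  define Rp where "Rp = {j\<in>R. 0 \<le> j}"
  define Rn where "Rn = {j\<in>R. j < 0}"
  have finR: "finite R" unfolding R_def using finK by simp
  have RU: "R = Rp \<union> Rn" unfolding Rp_def Rn_def by auto
  have RD: "Rp \<inter> Rn = {}" unfolding Rp_def Rn_def by auto
  have finRp: "finite Rp" "finite Rn" unfolding Rp_def Rn_def using finR by auto
  have sR: "sum F R = sum F Rp + sum F Rn"
    unfolding RU by (rule sum.union_disjoint[OF finRp RD])
  have cR2: "card Rp + card Rn = card R"
    unfolding RU by (rule card_Un_disjoint[OF finRp RD, symmetric])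
  define P where "P = nat ` Rp"
  have injP: "inj_on nat Rp" unfolding Rp_def by (auto simp: inj_on_def)
  have sP: "sum F Rp = (\<Sum>i\<in>P. F (int i))"
    unfolding P_def by (subst sum.reindex[OF injP]) (auto simp: Rp_def intro: sum.cong)
  have cP: "card P = card Rp" unfolding P_def using card_image[OF injP] .
  have Psub: "P \<subseteq> {..<h+1}"
  proof
    fix i assume "i \<in> P"
    then obtain k where "i = nat (r k)" unfolding P_def Rp_def R_def by auto
    then show "i \<in> {..<h+1}" using r_hi[of k] by auto
  qed
  have monoP: "F (int j) \<le> F (int i)" if "i \<le> j" "j < h+1" for i j
  proof -
    have a: "\<bar>2*pi*real i/real p - angp\<bar> \<le> \<bar>2*pi*real j/real p - angp\<bar>"
    proof (cases "i = 0")
      case True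
      show ?thesis
      proof (cases "j = 0")
        case False
        then have "2*pi*real j/real p \<ge> 2*pi/real p" using pp by (simp add: divide_right_mono)
        moreover have "2*pi/real p = 2 * (pi/real p)" by simp
        moreover have "angp \<le> pi/real p" "- angp \<le> pi/real p" using psi by auto
        ultimately have "\<bar>angp\<bar> \<le> 2*pi*real j/real p - angp" by linarith
        moreover have "2*pi*real j/real p - angp \<le> \<bar>2*pi*real j/real p - angp\<bar>" by (rule abs_ge_self)
        moreover have "\<bar>2*pi*real i/real p - angp\<bar> = \<bar>angp\<bar>" using True by simp
        ultimately show ?thesis by linarith
      qed (use True in simp)
    next
      case False
      then have "2*pi*real i/real p \<ge> 2*pi/real p" using pp by (simp add: divide_right_mono)
      moreover have "2*pi/real p \<ge> pi/real p" using pp by (simp add: divide_right_mono)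
      moreover have "2*pi*real i/real p \<le> 2*pi*real j/real p" using that pp by (simp add: divide_right_mono)
      ultimately show ?thesis using psi by auto
    qed
    have b: "\<bar>2*pi*real j/real p - angp\<bar> \<le> pi"
    proof -
      have "real j \<le> real h" using that by simp
      then have "2*pi*real j/real p \<le> 2*pi*real h/real p" using pp by (simp add: divide_right_mono)
      also have "2*pi*real h/real p = pi - pi/real p" using ph pp by (simp add: field_simps)
      finally have "2*pi*real j/real p \<le> pi - pi/real p" .
      moreover have "angp \<le> pi/real p" "- angp \<le> pi/real p" using psi by auto
      moreover have "pi/real p \<le> pi" using pp p3 by (simp add: field_simps)
      moreover have "0 \<le> 2*pi*real j/real p" using pp by simp
      ultimately show ?thesis unfolding abs_le_iff by linarith
    qed
    have "cos \<bar>2*pi*real j/real p - angp\<bar> \<le> cos \<bar>2*pi*real i/real p - angp\<bar>"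
      by (rule cos_monotone_0_pi_le) (use a b in auto)
    then show ?thesis unfolding F_def by simp
  qed
  have bP: "(\<Sum>i\<in>P. F (int i)) \<le> (\<Sum>i<card P. F (int i))"
    by (rule dec_sum[OF _ Psub]) (use monoP in auto)
  define G where "G i = F (- int i - 1)" for i :: nat
  define N where "N = (\<lambda>j. nat (- j - 1)) ` Rn"
  have injN: "inj_on (\<lambda>j. nat (- j - 1)) Rn" unfolding Rn_def by (auto simp: inj_on_def)
  have sN: "sum F Rn = (\<Sum>i\<in>N. G i)"
    unfolding N_def G_def by (subst sum.reindex[OF injN]) (auto simp: Rn_def intro: sum.cong)
  have cN: "card N = card Rn" unfolding N_def using card_image[OF injN] .
  have Nsub: "N \<subseteq> {..<h}"
  proof
    fix i assume "i \<in> N"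
    then obtain k where "i = nat (- r k - 1)" "r k < 0" unfolding N_def Rn_def R_def by auto
    then show "i \<in> {..<h}" using r_lo[of k] by auto
  qed
  have Gf: "G i = cos (2*pi*real (i+1)/real p + angp)" for i
  proof -
    have "2*pi* of_int (- int i - 1)/real p - angp = - (2*pi*real (i+1)/real p + angp)"
      by (simp add: divide_simps) (simp add: algebra_simps)
    then show ?thesis unfolding G_def F_def by (metis cos_minus)
  qed
  have monoN: "G j \<le> G i" if "i \<le> j" "j < h" for i j
  proof -
    have a: "0 \<le> 2*pi*real (i+1)/real p + angp"
    proof -
      have "2*pi*real (i+1)/real p \<ge> 2*pi/real p" using pp by (simp add: divide_right_mono)
      moreover have "2*pi/real p \<ge> pi/real p" using pp by (simp add: divide_right_mono)
      ultimately show ?thesis using psi by auto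
    qed
    have c: "2*pi*real (i+1)/real p \<le> 2*pi*real (j+1)/real p" using that pp by (simp add: divide_right_mono)
    have b: "2*pi*real (j+1)/real p + angp \<le> pi"
    proof -
      have "real (j+1) \<le> real h" using that by simp
      then have "2*pi*real (j+1)/real p \<le> 2*pi*real h/real p" using pp by (simp add: divide_right_mono)
      also have "2*pi*real h/real p = pi - pi/real p" using ph pp by (simp add: field_simps)
      finally have "2*pi*real (j+1)/real p \<le> pi - pi/real p" .
      moreover have "angp \<le> pi/real p" "- angp \<le> pi/real p" using psi by auto
      ultimately show ?thesis by linarith
    qed
    show ?thesis unfolding Gf by (rule cos_monotone_0_pi_le) (use a b c in auto)
  qed
  have bN: "(\<Sum>i\<in>N. G i) \<le> (\<Sum>i<card N. G i)"
    by (rule dec_sum[OF _ Nsub]) (use monoN in auto)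
  define a where "a = card P"
  define b where "b = card N"
  have ab: "a + b = card K" unfolding a_def b_def using cP cN cR2 cR by simp
  have d2: "(2*pi/real p)/2 = pi/real p" by simp
  have t1: "2 * sin (pi/real p) * (\<Sum>i<a. F (int i)) = sin (- angp + (real a - 1/2) * (2*pi/real p)) - sin (- angp - pi/real p)"
  proof -
    have "(\<Sum>i<a. F (int i)) = (\<Sum>i<a. cos (- angp + real i * (2*pi/real p)))"
      unfolding F_def by (intro sum.cong) (auto simp: algebra_simps)
    then show ?thesis using tel_cos[of "2*pi/real p" "-angp" a] d2 by simp
  qed
  have t2: "2 * sin (pi/real p) * (\<Sum>i<b. G i) = sin ((2*pi/real p + angp) + (real b - 1/2) * (2*pi/real p)) - sin ((2*pi/real p + angp) - pi/real p)"
  proof -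
    have "(\<Sum>i<b. G i) = (\<Sum>i<b. cos ((2*pi/real p + angp) + real i * (2*pi/real p)))"
      unfolding Gf by (intro sum.cong refl arg_cong[where f=cos]) (simp add: add_divide_distrib algebra_simps)
    then show ?thesis using tel_cos[of "2*pi/real p" "2*pi/real p + angp" b] d2 by simp
  qed
  have canc: "- sin (- angp - pi/real p) - sin ((2*pi/real p + angp) - pi/real p) = 0"
  proof -
    have "(2*pi/real p + angp) - pi/real p = - (- angp - pi/real p)" by (simp add: field_simps)
    then show ?thesis by (simp only: sin_minus)
  qed
  have sumsin: "sin (- angp + (real a - 1/2) * (2*pi/real p)) + sin ((2*pi/real p + angp) + (real b - 1/2) * (2*pi/real p))
      = 2 * sin (pi * real (card K) / real p) * cos ((- angp + (real a - 1/2) * (2*pi/real p) - ((2*pi/real p + angp) + (real b - 1/2) * (2*pi/real p)))/2)"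
  proof -
    have "(- angp + (real a - 1/2) * (2*pi/real p) + ((2*pi/real p + angp) + (real b - 1/2) * (2*pi/real p)))/2 = pi * real (card K) / real p"
      using ab[symmetric] pp by (simp add: field_simps)
    then show ?thesis by (simp add: sin_plus_sin)
  qed
  have sinK: "0 \<le> sin (pi * real (card K) / real p)"
  proof (rule sin_ge_zero)
    have "card K \<le> p" using card_mono[OF _ K] by simp
    then show "pi * real (card K) / real p \<le> pi" using pp by (simp add: field_simps)
  qed (use pp in auto)
  have "2 * sin (pi/real p) * ((\<Sum>i<a. F (int i)) + (\<Sum>i<b. G i)) \<le> 2 * sin (pi * real (card K) / real p)"
  proof -
    have "2 * sin (pi/real p) * ((\<Sum>i<a. F (int i)) + (\<Sum>i<b. G i))
       = 2 * sin (pi * real (card K) / real p) * cos ((- angp + (real a - 1/2) * (2*pi/real p) - ((2*pi/real p + angp) + (real b - 1/2) * (2*pi/real p)))/2)"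
      using t1 t2 canc sumsin by (simp add: algebra_simps)
    also have "\<dots> \<le> 2 * sin (pi * real (card K) / real p) * 1"
      using sinK by (intro mult_left_mono) auto
    finally show ?thesis by simp
  qed
  moreover have sp: "sin (pi/real p) > 0"
    by (rule sin_gt_zero) (use p3 in \<open>auto simp: field_simps\<close>)
  ultimately have fin: "(\<Sum>i<a. F (int i)) + (\<Sum>i<b. G i) \<le> sin (pi * real (card K) / real p) / sin (pi / real p)"
    by (simp add: field_simps)
  have "(\<Sum>k\<in>K. cos (2*pi*real k/real p - \<phi>)) \<le> (\<Sum>i<a. F (int i)) + (\<Sum>i<b. G i)"
    unfolding eq1 sR sP sN a_def b_def using bP bN cP cN by simp
  then show ?thesis using fin by linarith
qed

lemma core_bound:
  fixes p :: nat and B :: "'b set" and \<phi> :: "'b \<Rightarrow> real"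
  assumes odd: "odd p" and p3: "p \<ge> 3" and finB: "finite B" and Bne: "B \<noteq> {}"
  shows "(\<Sum>k<p. Max ((\<lambda>b. cos (2*pi*real k/real p - \<phi> b)) ` B))
         \<le> real (card B) * sin (pi / real (card B)) / sin (pi / real p)"
proof -
  have pp: "real p > 0" using p3 by simp
  define m where "m = card B"
  have m0: "m > 0" using finB Bne unfolding m_def by (simp add: card_gt_0_iff)
  have "\<forall>k. \<exists>b\<in>B. Max ((\<lambda>b. cos (2*pi*real k/real p - \<phi> b)) ` B) = cos (2*pi*real k/real p - \<phi> b)"
  proof
    fix k
    have "Max ((\<lambda>b. cos (2*pi*real k/real p - \<phi> b)) ` B) \<in> (\<lambda>b. cos (2*pi*real k/real p - \<phi> b)) ` B"
      using finB Bne by (intro Max_in) auto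
    then show "\<exists>b\<in>B. Max ((\<lambda>b. cos (2*pi*real k/real p - \<phi> b)) ` B) = cos (2*pi*real k/real p - \<phi> b)"
      by auto
  qed
  then obtain sel where sel: "\<And>k. sel k \<in> B"
    "\<And>k. Max ((\<lambda>b. cos (2*pi*real k/real p - \<phi> b)) ` B) = cos (2*pi*real k/real p - \<phi> (sel k))"
    by metis
  define Kb where "Kb b = {k \<in> {..<p}. sel k = b}" for b
  have img: "sel ` {..<p} \<subseteq> B" using sel(1) by auto
  have "(\<Sum>k<p. Max ((\<lambda>b. cos (2*pi*real k/real p - \<phi> b)) ` B)) = (\<Sum>k<p. cos (2*pi*real k/real p - \<phi> (sel k)))"
    using sel(2) by simp
  also have "\<dots> = (\<Sum>b\<in>B. \<Sum>k\<in>Kb b. cos (2*pi*real k/real p - \<phi> (sel k)))"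
    unfolding Kb_def by (rule sum.group[OF _ finB img, symmetric]) simp
  also have "\<dots> = (\<Sum>b\<in>B. \<Sum>k\<in>Kb b. cos (2*pi*real k/real p - \<phi> b))"
    by (intro sum.cong refl) (auto simp: Kb_def)
  also have "\<dots> \<le> (\<Sum>b\<in>B. sin (pi * real (card (Kb b)) / real p) / sin (pi / real p))"
    by (intro sum_mono subset_cos_bound[OF odd p3]) (auto simp: Kb_def)
  also have "\<dots> \<le> (\<Sum>b\<in>B. (sin (pi / real m) + cos (pi / real m) * (pi * real (card (Kb b)) / real p - pi / real m)) / sin (pi / real p))"
  proof (intro sum_mono divide_right_mono sin_tangent)
    fix b
    have "card (Kb b) \<le> p" using card_mono[of "{..<p}" "Kb b"] by (auto simp: Kb_def)
    then show "pi * real (card (Kb b)) / real p \<le> pi" using pp by (simp add: field_simps)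
    show "pi / real m \<le> pi" using m0 by (simp add: field_simps)
    show "0 \<le> sin (pi / real p)" using p3 by (intro sin_ge_zero) (auto simp: field_simps)
  qed (use m0 in auto)
  also have "\<dots> = (real m * sin (pi / real m) + cos (pi / real m) * (pi * (\<Sum>b\<in>B. real (card (Kb b))) / real p - real m * (pi / real m))) / sin (pi / real p)"
    by (simp add: sum_divide_distrib[symmetric] sum.distrib sum_distrib_left[symmetric] sum_subtractf
        sum_divide_distrib[symmetric] m_def algebra_simps) (simp add: sum_distrib_left mult.commute)
  also have "(\<Sum>b\<in>B. real (card (Kb b))) = real p"
  proof -
    have "(\<Sum>b\<in>B. card (Kb b)) = (\<Sum>b\<in>B. \<Sum>k\<in>Kb b. (1::nat))" by simp
    also have "\<dots> = (\<Sum>k<p. (1::nat))" unfolding Kb_def by (rule sum.group[OF _ finB img]) simp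
    finally show ?thesis by (metis card_lessThan card_eq_sum of_nat_sum)
  qed
  finally show ?thesis using m0 pp unfolding m_def by simp
qed

lemma field_char_eq:
  assumes "prime p" "w \<ge> 1" "card (UNIV :: 'a::{finite,field} set) = p ^ w"
  shows "CHAR('a) = p"
proof -
  have pos: "CHAR('a) > 0" by (rule finite_imp_CHAR_pos) simp
  have pr: "prime CHAR('a)" using prime_CHAR_semidom[OF pos] .
  have "CHAR('a) dvd p ^ w" using CHAR_dvd_CARD[where 'a='a] assms(3) by simp
  then have "CHAR('a) dvd p" using pr prime_dvd_power by blast
  then show ?thesis using pr assms(1) primes_dvd_imp_eq by blast
qed

lemma finite_field_pow_card:
  fixes x :: "'a::{finite,field}"
  shows "x ^ CARD('a) = x"
proof (cases "x = 0")
  case False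
  have "x * (\<Prod>y\<in>UNIV-{0}. x * y) = x * x ^ (CARD('a) - 1) * \<Prod>(UNIV-{0})"
    by (simp add: prod.distrib mult_ac)
  also have "x * x ^ (CARD('a) - 1) = x ^ Suc (CARD('a) - 1)"
    by (subst power_Suc) auto
  also have "Suc (CARD('a) - 1) = CARD('a)"
    using finite_UNIV_card_ge_0[where ?'a = 'a] by simp
  also have "(\<Prod>y\<in>UNIV-{0}. x * y) = (\<Prod>y\<in>UNIV-{0}. y)"
    by (rule prod.reindex_bij_witness[of _ "\<lambda>y. y / x" "\<lambda>y. x * y"]) (use False in auto)
  finally show ?thesis
    by simp
qed (use finite_UNIV_card_ge_0[where ?'a = 'a] in auto)

definition trf :: "nat \<Rightarrow> nat \<Rightarrow> 'a::{finite,field} \<Rightarrow> 'a" where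
  "trf p w x = (\<Sum>i<w. x ^ (p ^ i))"

context
  fixes p w :: nat
  assumes prp: "prime p" and w1: "w \<ge> 1" and cardq: "card (UNIV :: 'a::{finite,field} set) = p ^ w"
begin

lemma charp: "CHAR('a) = p" using field_char_eq[OF prp w1 cardq] .

lemma p_gt1: "p > 1" using prp prime_gt_1_nat by blast

lemma frob: "((x::'a) + y) ^ (p ^ i) = x ^ (p ^ i) + y ^ (p ^ i)"
  by (rule freshmans_dream') (use charp prp in auto)

lemma trf_add: "trf p w ((x::'a) + y) = trf p w x + trf p w y"
  unfolding trf_def by (simp add: frob sum.distrib)

lemma trf_pow: "(trf p w (x::'a)) ^ p = trf p w x"
proof -
  have "(trf p w x) ^ p = (\<Sum>i<w. (x ^ (p ^ i)) ^ p)"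
    unfolding trf_def by (rule freshmans_dream_sum) (use charp prp in auto)
  also have "\<dots> = (\<Sum>i<w. x ^ (p ^ Suc i))" by (simp add: power_mult[symmetric] mult.commute)
  also have "\<dots> = (\<Sum>i\<in>Suc ` {..<w}. x ^ (p ^ i))" by (simp add: sum.reindex)
  also have "Suc ` {..<w} = {1..w}" by (rule image_Suc_lessThan)
  also have "(\<Sum>i\<in>{1..w}. x ^ (p ^ i)) = (\<Sum>i\<in>{0..<w}. x ^ (p ^ i))"
  proof -
    have "(\<Sum>i\<in>{1..w}. x ^ (p ^ i)) = (\<Sum>i\<in>{1..<w}. x ^ (p ^ i)) + x ^ (p ^ w)"
      using w1 by (simp add: sum.last_plus)
    also have "x ^ (p ^ w) = x ^ (p ^ 0)" using finite_field_pow_card[of x] cardq by simp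
    also have "(\<Sum>i\<in>{1..<w}. x ^ (p ^ i)) + x ^ (p ^ 0) = (\<Sum>i\<in>{0..<w}. x ^ (p ^ i))"
      using w1 by (simp add: sum.atLeast_Suc_lessThan)
    finally show ?thesis .
  qed
  finally show ?thesis unfolding trf_def by (simp add: lessThan_atLeast0)
qed

lemma of_nat_pow_p: "(of_nat k :: 'a) ^ p = of_nat k"
proof (induction k)
  case 0 then show ?case using p_gt1 by simp
next
  case (Suc k)
  have "(of_nat (Suc k) :: 'a) ^ p = (of_nat k + 1) ^ (p ^ 1)" by (simp add: add.commute)
  also have "\<dots> = of_nat k ^ (p ^ 1) + 1 ^ (p ^ 1)" by (rule frob)
  finally show ?case using Suc by simp
qed

lemma of_nat_inj: "inj_on (of_nat :: nat \<Rightarrow> 'a) {..<p}"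
proof
  fix a b assume ab: "a \<in> {..<p}" "b \<in> {..<p}" "(of_nat a :: 'a) = of_nat b"
  then have "[a = b] (mod p)" using of_nat_eq_iff_cong_CHAR[where 'a='a, of a b] charp by simp
  then show "a = b" using ab by (simp add: cong_def)
qed

lemma prime_subfield: "{y::'a. y ^ p = y} = of_nat ` {..<p}"
proof (rule sym, rule card_subset_eq)
  show "of_nat ` {..<p} \<subseteq> {y::'a. y ^ p = y}" using of_nat_pow_p by auto
  define q :: "'a poly" where "q = Polynomial.monom 1 p - [:0, 1:]"
  have q0: "q \<noteq> 0"
  proof
    assume "q = 0"
    then have "Polynomial.coeff q p = 0" by simp
    then show False unfolding q_def using p_gt1 by (simp add: coeff_pCons split: nat.splits)
  qed
  have dq: "degree q \<le> p"
    unfolding q_def using p_gt1 by (intro degree_diff_le) (auto simp: degree_monom_le)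
  have "{y::'a. y ^ p = y} = {y. poly q y = 0}" unfolding q_def by (auto simp: poly_monom)
  then have "card {y::'a. y ^ p = y} \<le> p" using card_poly_roots_bound[OF q0] dq by simp
  moreover have "card (of_nat ` {..<p} :: 'a set) = p" using card_image[OF of_nat_inj] by simp
  moreover have "card (of_nat ` {..<p} :: 'a set) \<le> card {y::'a. y ^ p = y}"
    by (rule card_mono) (use of_nat_pow_p in auto)
  ultimately show "card (of_nat ` {..<p} :: 'a set) = card {y::'a. y ^ p = y}" by linarith
qed simp

definition T :: "'a \<Rightarrow> nat" where
  "T x = (THE k. k < p \<and> of_nat k = trf p w x)"

lemma T_prop: "T x < p \<and> of_nat (T x) = trf p w x"
proof -
  have "trf p w x \<in> {y::'a. y ^ p = y}" using trf_pow by simp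
  then obtain k where k: "k < p" "of_nat k = trf p w x" unfolding prime_subfield by auto
  have "\<exists>!k. k < p \<and> (of_nat k :: 'a) = trf p w x"
    using k of_nat_inj by (auto simp: inj_on_def)
  then show ?thesis unfolding T_def by (rule theI')
qed

lemma T_lt: "T x < p" using T_prop by blast

lemma T_unique: "k < p \<Longrightarrow> of_nat k = trf p w x \<Longrightarrow> T x = k"
  using T_prop[of x] of_nat_inj by (auto simp: inj_on_def)

lemma T_add: "T (x + y) = (T x + T y) mod p"
proof (rule T_unique)
  show "(T x + T y) mod p < p" using p_gt1 by simp
  have "(of_nat ((T x + T y) mod p) :: 'a) = of_nat (T x + T y)"
    unfolding of_nat_eq_iff_cong_CHAR[where 'a='a] charp by (simp add: cong_def)
  also have "\<dots> = trf p w (x + y)" using T_prop[of x] T_prop[of y] trf_add by simp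
  finally show "(of_nat ((T x + T y) mod p) :: 'a) = trf p w (x + y)" .
qed

lemma T_zero: "T 0 = 0"
proof -
  have e: "T 0 = (T 0 + T 0) mod p" using T_add[of 0 0] by simp
  have l: "T 0 < p" by (rule T_lt)
  show ?thesis
  proof (cases "T 0 + T 0 < p")
    case True then show ?thesis using e by simp
  next
    case False
    then have "(T 0 + T 0) mod p = (T 0 + T 0 - p) mod p" by (simp add: le_mod_geq)
    also have "\<dots> = T 0 + T 0 - p" using l by simp
    finally show ?thesis using e l by linarith
  qed
qed

lemma trf_nonzero: "\<exists>x::'a. trf p w x \<noteq> 0"
proof (rule ccontr)
  assume "\<not> ?thesis"
  then have all: "\<forall>x::'a. trf p w x = 0" by simp
  define q :: "'a poly" where "q = (\<Sum>i<w. Polynomial.monom 1 (p ^ i))"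
  have pi: "p ^ i = p ^ (w - 1) \<longleftrightarrow> i = w - 1" for i using p_gt1 by (simp add: power_inject_exp)
  have "Polynomial.coeff q (p ^ (w - 1)) = (\<Sum>i<w. if i = w - 1 then 1 else 0)"
    unfolding q_def coeff_sum by (intro sum.cong) (use p_gt1 in \<open>auto simp: coeff_monom\<close>)
  also have "\<dots> = 1" using w1 by simp
  finally have q0: "q \<noteq> 0" by auto
  have dq: "degree q \<le> p ^ (w - 1)"
    unfolding q_def
  proof (rule degree_sum_le)
    fix i assume "i \<in> {..<w}"
    then have "p ^ i \<le> p ^ (w - 1)" using p_gt1 by (intro power_increasing) auto
    then show "degree (Polynomial.monom (1::'a) (p ^ i)) \<le> p ^ (w - 1)" by (simp add: degree_monom_eq)
  qed simp
  have "{x::'a. poly q x = 0} = UNIV" using all unfolding q_def trf_def by (simp add: poly_sum poly_monom)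
  then have "p ^ w \<le> p ^ (w - 1)" using card_poly_roots_bound[OF q0] dq cardq by simp
  moreover have "p ^ (w - 1) < p ^ w" using p_gt1 w1 by (intro power_strict_increasing) auto
  ultimately show False by linarith
qed


lemma T_nonzero: "\<exists>x0::'a. T x0 \<noteq> 0"
proof -
  obtain x0 :: 'a where "trf p w x0 \<noteq> 0" using trf_nonzero by blast
  moreover have "T x0 = 0 \<Longrightarrow> trf p w x0 = 0" using T_prop[of x0] by simp
  ultimately show ?thesis by blast
qed

lemma T_mult_nat: "T (of_nat m * (x::'a)) = (m * T x) mod p"
proof (induction m)
  case 0 then show ?case using T_zero by simp
next
  case (Suc m)
  have "T (of_nat (Suc m) * x) = T (x + of_nat m * x)" by (simp add: algebra_simps)
  also have "\<dots> = (T x + (m * T x) mod p) mod p" using T_add Suc by simp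
  also have "\<dots> = (Suc m * T x) mod p" by (simp add: mod_add_right_eq)
  finally show ?case .
qed

lemma T_surj: "v < p \<Longrightarrow> \<exists>a::'a. T a = v"
proof -
  assume v: "v < p"
  obtain x0 :: 'a where x0: "T x0 \<noteq> 0" using T_nonzero by blast
  have "coprime (T x0) p"
    using x0 T_lt[of x0] prp by (metis coprime_commute gcd_nat.order_iff_strict prime_imp_coprime_nat nat_dvd_not_less neq0_conv)
  then obtain u where u: "[T x0 * u = Suc 0] (mod p)" using cong_solve_coprime_nat by blast
  have "T (of_nat (u * v) * x0) = (u * v * T x0) mod p" by (rule T_mult_nat)
  also have "u * v * T x0 = (T x0 * u) * v" by (simp add: mult_ac)
  also have "((T x0 * u) * v) mod p = (Suc 0 * v) mod p"
    using u by (metis cong_def mod_mult_left_eq)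
  also have "\<dots> = v" using v by simp
  finally show ?thesis by blast
qed

lemma modsum_eq: "t < p \<Longrightarrow> v < p \<Longrightarrow> (t + v) mod p = v \<Longrightarrow> t = 0"
proof -
  assume a: "t < p" "v < p" "(t + v) mod p = v"
  show "t = 0"
  proof (cases "t + v < p")
    case True then show ?thesis using a by simp
  next
    case False
    then have "(t + v) mod p = (t + v - p) mod p" by (simp add: le_mod_geq)
    also have "\<dots> = t + v - p" using a by simp
    finally show ?thesis using a False by arith
  qed
qed

definition c0 :: nat where "c0 = card {x::'a. T x = 0}"

lemma fiber_card: "v < p \<Longrightarrow> card {x::'a. T x = v} = c0"
proof -
  assume v: "v < p"
  obtain a :: 'a where a: "T a = v" using T_surj[OF v] by blast
  have "bij_betw (\<lambda>x. x + a) {x::'a. T x = 0} {x. T x = v}"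
  proof (rule bij_betw_byWitness[where f'="\<lambda>y. y - a"])
    show "\<forall>x\<in>{x::'a. T x = 0}. x + a - a = x" by simp
    show "\<forall>y\<in>{x::'a. T x = v}. y - a + a = y" by simp
    show "(\<lambda>x. x + a) ` {x. T x = 0} \<subseteq> {x. T x = v}"
      using T_add a v by auto
    show "(\<lambda>y. y - a) ` {x. T x = v} \<subseteq> {x. T x = 0}"
    proof
      fix z assume "z \<in> (\<lambda>y. y - a) ` {x. T x = v}"
      then obtain y where y: "T y = v" "z = y - a" by auto
      have "T y = (T z + v) mod p" using T_add[of z a] a y by simp
      then have "T z = 0" using modsum_eq[OF T_lt v] y by simp
      then show "z \<in> {x. T x = 0}" by simp
    qed
  qed
  then show ?thesis unfolding c0_def by (simp add: bij_betw_same_card)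
qed

lemma sum_T: "(\<Sum>x::'a\<in>UNIV. g (T x)) = of_nat c0 * (\<Sum>v<p. g v)"
proof -
  have img: "T ` (UNIV::'a set) \<subseteq> {..<p}" using T_lt by auto
  have "(\<Sum>x::'a\<in>UNIV. g (T x)) = (\<Sum>v<p. \<Sum>x\<in>{x\<in>UNIV. T x = v}. g (T x))"
    by (rule sum.group[OF _ _ img, symmetric]) auto
  also have "\<dots> = (\<Sum>v<p. of_nat (card {x::'a. T x = v}) * g v)"
    by (intro sum.cong refl) simp
  also have "\<dots> = (\<Sum>v<p. of_nat c0 * g v)" using fiber_card by simp
  finally show ?thesis by (simp add: sum_distrib_left)
qed

lemma c0_mult: "p * c0 = p ^ w"
proof -
  have "(\<Sum>x::'a\<in>UNIV. (1::nat)) = c0 * (\<Sum>v<p. 1)" using sum_T[of "\<lambda>_. (1::nat)"] by simp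
  then show ?thesis using cardq by simp
qed

definition chi :: "'a \<Rightarrow> 'a \<Rightarrow> complex" where
  "chi \<alpha> x = cis (2 * pi * real (T (\<alpha> * x)) / real p)"

lemma cis_mod: "cis (2 * pi * real (k mod p) / real p) = cis (2 * pi * real k / real p)"
proof -
  have k: "real k = real (k mod p) + real p * real (k div p)"
    by (metis div_mult_mod_eq of_nat_add of_nat_mult add.commute mult.commute)
  have "cis (2 * pi * real k / real p) = cis (2 * pi * real (k mod p) / real p + 2 * pi * real (k div p))"
    using p_gt1 by (subst k) (simp add: field_simps)
  also have "\<dots> = cis (2 * pi * real (k mod p) / real p) * cis (2 * pi * real (k div p))"
    by (rule cis_mult[symmetric])
  also have "cis (2 * pi * real (k div p)) = 1" by (rule cis_multiple_2pi) simp
  finally show ?thesis by simp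
qed

lemma chi_add: "chi \<alpha> (x + y) = chi \<alpha> x * chi \<alpha> y"
proof -
  have "chi \<alpha> (x + y) = cis (2 * pi * real ((T (\<alpha> * x) + T (\<alpha> * y)) mod p) / real p)"
    unfolding chi_def by (simp add: distrib_left T_add)
  also have "\<dots> = cis (2 * pi * real (T (\<alpha> * x) + T (\<alpha> * y)) / real p)" by (rule cis_mod)
  also have "\<dots> = chi \<alpha> x * chi \<alpha> y" unfolding chi_def cis_mult by (simp add: add_divide_distrib distrib_left)
  finally show ?thesis .
qed

lemma chi_0 [simp]: "chi 0 x = 1" "chi \<alpha> 0 = 1"
  unfolding chi_def by (simp_all add: T_zero)

lemma chi_norm [simp]: "cmod (chi \<alpha> x) = 1"
  unfolding chi_def by simp

lemma chi_cnj_mult: "chi \<alpha> x * cnj (chi \<alpha> x) = 1"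
proof -
  have "complex_of_real ((cmod (chi \<alpha> x))^2) = chi \<alpha> x * cnj (chi \<alpha> x)" by (rule complex_norm_square)
  then show ?thesis by simp
qed

lemma chi_neg: "chi \<alpha> (- x) = cnj (chi \<alpha> x)"
proof -
  have a: "chi \<alpha> (- x) * chi \<alpha> x = 1" using chi_add[of \<alpha> "-x" x] by simp
  have "chi \<alpha> (- x) = chi \<alpha> (- x) * (chi \<alpha> x * cnj (chi \<alpha> x))" using chi_cnj_mult by simp
  also have "\<dots> = (chi \<alpha> (- x) * chi \<alpha> x) * cnj (chi \<alpha> x)" by (simp only: mult.assoc)
  also have "\<dots> = cnj (chi \<alpha> x)" using a by simp
  finally show ?thesis .
qed

lemma sum_roots_unity:
  assumes p2: "p > 2"
  shows "(\<Sum>v<p. cis (2 * pi * real v / real p)) = 0"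
proof -
  define z where "z = cis (2 * pi / real p)"
  have zv: "cis (2 * pi * real v / real p) = z ^ v" for v
    unfolding z_def Complex.DeMoivre by (simp add: field_simps)
  have "sin (2 * pi / real p) > 0"
  proof (rule sin_gt_zero)
    show "0 < 2 * pi / real p" using p_gt1 by simp
    have "real p > 2" using p2 by simp
    then show "2 * pi / real p < pi" by (simp add: field_simps)
  qed
  then have z1: "z \<noteq> 1" unfolding z_def by (metis cis.simps(2) zero_complex.sel(2) one_complex.sel(2) less_irrefl)
  have zp: "z ^ p = 1" unfolding z_def Complex.DeMoivre using p_gt1 by simp
  have "(\<Sum>v<p. cis (2 * pi * real v / real p)) = (\<Sum>v<p. z ^ v)" using zv by simp
  also have "\<dots> = 0" using geometric_sum[OF z1, of p] zp by simp
  finally show ?thesis .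
qed

lemma chi_orth:
  assumes p2: "p > 2"
  shows "(\<Sum>\<alpha>::'a\<in>UNIV. chi \<alpha> s) = (if s = 0 then of_nat (p ^ w) else 0)"
proof (cases "s = 0")
  case True then show ?thesis using cardq by simp
next
  case False
  have "(\<Sum>\<alpha>::'a\<in>UNIV. chi \<alpha> s) = (\<Sum>\<beta>::'a\<in>UNIV. cis (2 * pi * real (T \<beta>) / real p))"
    unfolding chi_def
    by (rule sum.reindex_bij_witness[of _ "\<lambda>\<beta>. \<beta> / s" "\<lambda>\<alpha>. \<alpha> * s"]) (use False in auto)
  also have "\<dots> = of_nat c0 * (\<Sum>v<p. cis (2 * pi * real v / real p))" by (rule sum_T)
  also have "\<dots> = 0" using sum_roots_unity[OF p2] by simp
  finally show ?thesis using False by simp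
qed

lemma parseval:
  assumes p2: "p > 2"
  shows "(\<Sum>\<alpha>::'a\<in>UNIV. (cmod (\<Sum>x\<in>S. chi \<alpha> x))^2) = real (p ^ w) * real (card S)"
proof -
  have e: "chi \<alpha> x * cnj (chi \<alpha> y) = chi \<alpha> (x - y)" for \<alpha> x y
    using chi_add[of \<alpha> x "-y"] chi_neg[of \<alpha> y] by simp
  have "complex_of_real (\<Sum>\<alpha>::'a\<in>UNIV. (cmod (\<Sum>x\<in>S. chi \<alpha> x))^2)
      = (\<Sum>\<alpha>::'a\<in>UNIV. (\<Sum>x\<in>S. chi \<alpha> x) * cnj (\<Sum>y\<in>S. chi \<alpha> y))"
    by (simp only: of_real_sum complex_norm_square)
  also have "\<dots> = (\<Sum>\<alpha>::'a\<in>UNIV. \<Sum>x\<in>S. \<Sum>y\<in>S. chi \<alpha> (x - y))"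
    by (simp only: cnj_sum sum_product e)
  also have "\<dots> = (\<Sum>x\<in>S. \<Sum>y\<in>S. \<Sum>\<alpha>::'a\<in>UNIV. chi \<alpha> (x - y))"
    by (subst sum.swap) (subst sum.swap, rule refl)
  also have "\<dots> = (\<Sum>x\<in>S. \<Sum>y\<in>S. if x = y then of_nat (p ^ w) else 0)"
    using chi_orth[OF p2] by simp
  also have "\<dots> = of_nat (p ^ w) * of_nat (card S)"
    by (simp add: sum.delta)
  finally have "complex_of_real (\<Sum>\<alpha>::'a\<in>UNIV. (cmod (\<Sum>x\<in>S. chi \<alpha> x))^2) = complex_of_real (real (p ^ w) * real (card S))"
    by simp
  then show ?thesis by (simp only: of_real_eq_iff)
qed

end

lemma pmf_leak:
  assumes "finite S" "S \<noteq> {}"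
  shows "pmf (leak_dist n \<tau> S) y = real (card {x\<in>S. map (\<lambda>j. \<tau> j (x j)) [0..<n] = y}) / real (card S)"
proof -
  have "pmf (leak_dist n \<tau> S) y = real (card (S \<inter> (\<lambda>x. map (\<lambda>j. \<tau> j (x j)) [0..<n]) -` {y})) / real (card S)"
    unfolding leak_dist_def pmf_map using measure_pmf_of_set[OF assms(2,1)] by simp
  also have "S \<inter> (\<lambda>x. map (\<lambda>j. \<tau> j (x j)) [0..<n]) -` {y} = {x\<in>S. map (\<lambda>j. \<tau> j (x j)) [0..<n] = y}" by auto
  finally show ?thesis .
qed

lemma map_eq_iff_nth: "map g [0..<n] = map h [0..<n] \<longleftrightarrow> (\<forall>j<n. g j = h j)"
  by (auto simp: list_eq_iff_nth_eq)

lemma inj_map_PiE: "inj_on (\<lambda>g. map g [0..<n]) (PiE {..<n} B)"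
proof
  fix g h assume gh: "g \<in> PiE {..<n} B" "h \<in> PiE {..<n} B" "map g [0..<n] = map h [0..<n]"
  then have "\<forall>j<n. g j = h j" by (simp add: map_eq_iff_nth)
  then show "g = h" using gh by (intro PiE_ext[OF gh(1,2)]) auto
qed

lemma finite_vecs: "finite (vecs n :: (nat \<Rightarrow> 'a::finite) set)"
  unfolding vecs_def by (rule finite_PiE) auto

lemma stat_dist_finite:
  fixes \<tau> :: "nat \<Rightarrow> 'a::finite \<Rightarrow> 'b" and S1 S2 :: "(nat \<Rightarrow> 'a) set"
  assumes S: "S1 \<subseteq> vecs n" "S2 \<subseteq> vecs n" "S1 \<noteq> {}" "S2 \<noteq> {}"
    and B: "finite B" "\<And>j a. j < n \<Longrightarrow> \<tau> j a \<in> B"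
  shows "stat_dist (leak_dist n \<tau> S1) (leak_dist n \<tau> S2) =
     (1/2) * (\<Sum>g\<in>PiE {..<n} (\<lambda>_. B). \<bar>pmf (leak_dist n \<tau> S1) (map g [0..<n]) - pmf (leak_dist n \<tau> S2) (map g [0..<n])\<bar>)"
proof -
  define Y where "Y = (\<lambda>g. map g [0..<n]) ` PiE {..<n} (\<lambda>_. B)"
  have finY: "finite Y" unfolding Y_def using B(1) by (intro finite_imageI finite_PiE) auto
  have inY: "map (\<lambda>j. \<tau> j (x j)) [0..<n] \<in> Y" for x
  proof -
    have "restrict (\<lambda>j. \<tau> j (x j)) {..<n} \<in> PiE {..<n} (\<lambda>_. B)" using B(2) by auto
    moreover have "map (\<lambda>j. \<tau> j (x j)) [0..<n] = map (restrict (\<lambda>j. \<tau> j (x j)) {..<n}) [0..<n]"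
      by (simp add: map_eq_iff_nth)
    ultimately show ?thesis unfolding Y_def by blast
  qed
  have fin: "finite S1" "finite S2" using S finite_vecs finite_subset by blast+
  have zero: "pmf (leak_dist n \<tau> Si) y = 0" if "y \<notin> Y" "finite Si" "Si \<noteq> {}" for y Si
  proof -
    have e: "{x\<in>Si. map (\<lambda>j. \<tau> j (x j)) [0..<n] = y} = {}" using inY that by auto
    show ?thesis unfolding pmf_leak[OF that(2,3), of n \<tau> y] e by simp
  qed
  have "infsum (\<lambda>y. \<bar>pmf (leak_dist n \<tau> S1) y - pmf (leak_dist n \<tau> S2) y\<bar>) UNIV
      = infsum (\<lambda>y. \<bar>pmf (leak_dist n \<tau> S1) y - pmf (leak_dist n \<tau> S2) y\<bar>) Y"
    by (rule infsum_cong_neutral) (use zero fin S in auto)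
  also have "\<dots> = (\<Sum>y\<in>Y. \<bar>pmf (leak_dist n \<tau> S1) y - pmf (leak_dist n \<tau> S2) y\<bar>)"
    using finY by simp
  also have "\<dots> = (\<Sum>g\<in>PiE {..<n} (\<lambda>_. B). \<bar>pmf (leak_dist n \<tau> S1) (map g [0..<n]) - pmf (leak_dist n \<tau> S2) (map g [0..<n])\<bar>)"
    unfolding Y_def by (rule sum.reindex[OF inj_map_PiE, unfolded comp_def])
  finally show ?thesis unfolding stat_dist_def by simp
qed

lemma PiE_UNIV_iff: "x \<in> PiE I (\<lambda>_. UNIV) \<longleftrightarrow> x \<in> extensional I"
  by (simp add: PiE_def)
lemma PiE_fib_iff: "x \<in> PiE {..<n} (\<lambda>j. {a. \<tau> j a = g j}) \<longleftrightarrow> x \<in> extensional {..<n} \<and> (\<forall>j<n. \<tau> j (x j) = g j)"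
  by (auto simp: PiE_iff)
lemma setC:
  fixes \<tau> :: "nat \<Rightarrow> 'a::{finite,field} \<Rightarrow> 'b"
  shows "{x\<in>additive_code n. map (\<lambda>j. \<tau> j (x j)) [0..<n] = map g [0..<n]} = {x\<in>PiE {..<n} (\<lambda>j. {a. \<tau> j a = g j}). (\<Sum>i<n. x i) = (0::'a)}"
proof (rule Set.set_eqI)
  fix x :: "nat \<Rightarrow> 'a"
  show "x \<in> {x\<in>additive_code n. map (\<lambda>j. \<tau> j (x j)) [0..<n] = map g [0..<n]} \<longleftrightarrow> x \<in> {x\<in>PiE {..<n} (\<lambda>j. {a. \<tau> j a = g j}). (\<Sum>i<n. x i) = (0::'a)}"
    unfolding mem_Collect_eq additive_code_def vecs_def map_eq_iff_nth PiE_UNIV_iff PiE_fib_iff by blast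
qed
lemma setU:
  fixes \<tau> :: "nat \<Rightarrow> 'a::{finite,field} \<Rightarrow> 'b"
  shows "{x\<in>vecs n. map (\<lambda>j. \<tau> j (x j)) [0..<n] = map g [0..<n]} = PiE {..<n} (\<lambda>j. {a. \<tau> j a = g j})"
proof (rule Set.set_eqI)
  fix x :: "nat \<Rightarrow> 'a"
  show "x \<in> {x\<in>vecs n. map (\<lambda>j. \<tau> j (x j)) [0..<n] = map g [0..<n]} \<longleftrightarrow> x \<in> PiE {..<n} (\<lambda>j. {a. \<tau> j a = g j})"
    unfolding mem_Collect_eq vecs_def map_eq_iff_nth PiE_UNIV_iff PiE_fib_iff by blast
qed

context
  fixes p w n \<mu> :: nat and \<tau> :: "nat \<Rightarrow> 'a::{finite,field} \<Rightarrow> bool list"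
  assumes prp: "prime p" and w1: "w \<ge> 1" and cardq: "CARD('a) = p ^ w"
    and n2: "n \<ge> 2" and mu1: "\<mu> \<ge> 1" and pbig: "2 ^ \<mu> < p"
    and lens: "\<forall>j<n. \<forall>a. length (\<tau> j a) = \<mu>"
begin

lemma p2: "p > 2"
proof -
  have "(2::nat) ^ 1 \<le> 2 ^ \<mu>" using mu1 by (intro power_increasing) auto
  then show ?thesis using pbig by simp
qed

lemma oddp: "odd p" using prime_odd_nat[OF prp p2] .

lemma chi_sum: "finite I \<Longrightarrow> chi p w (\<alpha>::'a) (\<Sum>i\<in>I. x i) = (\<Prod>i\<in>I. chi p w \<alpha> (x i))"
proof (induction I rule: finite_induct)
  case empty then show ?case using chi_0[OF prp w1 cardq] by simp
next
  case (insert i I) then show ?case using chi_add[OF prp w1 cardq] by simp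
qed

lemma chi_comm: "chi p w (\<alpha>::'a) a = chi p w a \<alpha>"
  by (simp add: chi_def[OF prp w1 cardq] mult.commute)

lemma chi_sum_UNIV: "(\<Sum>a::'a\<in>UNIV. chi p w (\<alpha>::'a) a) = (if \<alpha> = 0 then of_nat (p ^ w) else 0)"
  using chi_orth[OF prp w1 cardq p2, of \<alpha>] chi_comm by simp

lemma count_char:
  "complex_of_nat (card {x\<in>PiE {..<n} F. (\<Sum>i<n. x i) = (0::'a)})
     = (\<Sum>\<alpha>\<in>UNIV. \<Prod>j<n. \<Sum>a\<in>F j. chi p w \<alpha> a) / of_nat (p ^ w)"
proof -
  define P where "P = PiE {..<n} F"
  have finP: "finite P" unfolding P_def by (intro finite_PiE) auto
  have q0: "complex_of_nat (p ^ w) \<noteq> 0" using prp prime_gt_0_nat by simp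
  have "complex_of_nat (card {x\<in>P. (\<Sum>i<n. x i) = 0}) = (\<Sum>x\<in>{x\<in>P. (\<Sum>i<n. x i) = 0}. 1)"
    by simp
  also have "\<dots> = (\<Sum>x\<in>P. if (\<Sum>i<n. x i) = 0 then 1 else 0)"
    by (rule sum.inter_filter[OF finP])
  also have "\<dots> = (\<Sum>x\<in>P. (\<Sum>\<alpha>\<in>UNIV. chi p w \<alpha> (\<Sum>i<n. x i)) / of_nat (p ^ w))"
    using chi_orth[OF prp w1 cardq p2] q0 prime_gt_0_nat[OF prp] by (intro sum.cong refl) simp
  also have "\<dots> = (\<Sum>x\<in>P. (\<Sum>\<alpha>\<in>UNIV. \<Prod>j<n. chi p w \<alpha> (x j)) / of_nat (p ^ w))"
    by (intro sum.cong refl arg_cong2[where f="(/)"]) (rule chi_sum, simp)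
  also have "\<dots> = (\<Sum>\<alpha>\<in>UNIV. \<Sum>x\<in>P. \<Prod>j<n. chi p w \<alpha> (x j)) / of_nat (p ^ w)"
    by (simp only: sum_divide_distrib[symmetric] sum.swap[of _ P])
  also have "\<dots> = (\<Sum>\<alpha>\<in>UNIV. \<Prod>j<n. \<Sum>a\<in>F j. chi p w \<alpha> a) / of_nat (p ^ w)"
    unfolding P_def by (subst prod_sum_PiE) auto
  finally show ?thesis unfolding P_def .
qed

lemma card_code: "card (additive_code n :: (nat \<Rightarrow> 'a) set) = (p ^ w) ^ (n - 1)"
proof -
  have e: "additive_code n = {x\<in>PiE {..<n} (\<lambda>_. UNIV). (\<Sum>i<n. x i) = (0::'a)}"
    unfolding additive_code_def vecs_def by simp
  have "(\<Prod>j<n. \<Sum>a::'a\<in>UNIV. chi p w \<alpha> a) = (if \<alpha> = 0 then of_nat (p ^ w) ^ n else 0)" for \<alpha>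
    using n2 by (simp add: chi_sum_UNIV)
  then have "complex_of_nat (card (additive_code n :: (nat \<Rightarrow> 'a) set)) = of_nat (p ^ w) ^ n / of_nat (p ^ w)"
    unfolding e count_char by simp
  also have "\<dots> = of_nat ((p ^ w) ^ (n - 1))"
  proof -
    obtain k where k: "n = Suc k" using n2 by (metis Suc_pred' less_le_trans zero_less_numeral pos2)
    have "complex_of_nat (p ^ w) \<noteq> 0" using prp prime_gt_0_nat by simp
    then show ?thesis unfolding k by simp
  qed
  finally show ?thesis by (simp only: of_nat_eq_iff)
qed


lemma card_vecs: "card (vecs n :: (nat \<Rightarrow> 'a) set) = (p ^ w) ^ n"
  unfolding vecs_def using cardq by (simp add: card_PiE)

lemma code_ne: "additive_code n \<noteq> ({} :: (nat \<Rightarrow> 'a) set)"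
proof -
  have "(\<lambda>i\<in>{..<n}. 0::'a) \<in> additive_code n" unfolding additive_code_def vecs_def by simp
  then show ?thesis by blast
qed

lemma vecs_ne: "vecs n \<noteq> ({} :: (nat \<Rightarrow> 'a) set)"
proof -
  have "(\<lambda>i\<in>{..<n}. 0::'a) \<in> vecs n" unfolding vecs_def by simp
  then show ?thesis by blast
qed

lemma code_sub: "additive_code n \<subseteq> (vecs n :: (nat \<Rightarrow> 'a) set)"
  unfolding additive_code_def by auto

lemma diff_bound:
  "\<bar>pmf (leak_dist n \<tau> (additive_code n)) (map g [0..<n]) - pmf (leak_dist n \<tau> (vecs n)) (map g [0..<n])\<bar>
    \<le> (\<Sum>\<alpha>\<in>UNIV-{0::'a}. \<Prod>j<n. cmod (\<Sum>a\<in>{a. \<tau> j a = g j}. chi p w \<alpha> a)) / real ((p ^ w) ^ n)"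
proof -
  define F where "F j = {a. \<tau> j a = g j}" for j
  define Sf where "Sf \<alpha> j = (\<Sum>a\<in>F j. chi p w (\<alpha>::'a) a)" for \<alpha> j
  define q where "q = p ^ w"
  have q0: "q > 0" unfolding q_def using prp prime_gt_0_nat by simp
  have setC: "{x\<in>additive_code n. map (\<lambda>j. \<tau> j (x j)) [0..<n] = map g [0..<n]} = {x\<in>PiE {..<n} F. (\<Sum>i<n. x i) = (0::'a)}"
    unfolding F_def by (rule setC)
  have setU: "{x\<in>vecs n. map (\<lambda>j. \<tau> j (x j)) [0..<n] = map g [0..<n]} = PiE {..<n} F"
    unfolding F_def by (rule setU)
  have finC: "finite (additive_code n :: (nat \<Rightarrow> 'a) set)" using finite_vecs code_sub finite_subset by blast
  have "complex_of_real (pmf (leak_dist n \<tau> (additive_code n)) (map g [0..<n]))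
      = of_nat (card {x\<in>PiE {..<n} F. (\<Sum>i<n. x i) = (0::'a)}) / of_nat (q ^ (n - 1))"
    unfolding pmf_leak[OF finC code_ne] setC card_code q_def by simp
  also have "\<dots> = ((\<Sum>\<alpha>\<in>UNIV. \<Prod>j<n. Sf \<alpha> j) / of_nat q) / of_nat (q ^ (n - 1))"
    unfolding count_char Sf_def q_def ..
  also have "\<dots> = (\<Sum>\<alpha>\<in>UNIV. \<Prod>j<n. Sf \<alpha> j) / of_nat (q ^ n)"
  proof -
    obtain k where k: "n = Suc k" using n2 by (metis Suc_pred' less_le_trans zero_less_numeral pos2)
    show ?thesis unfolding k by simp
  qed
  finally have eC: "complex_of_real (pmf (leak_dist n \<tau> (additive_code n)) (map g [0..<n])) = (\<Sum>\<alpha>\<in>UNIV. \<Prod>j<n. Sf \<alpha> j) / of_nat (q ^ n)" .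
  have "complex_of_real (pmf (leak_dist n \<tau> (vecs n)) (map g [0..<n])) = of_nat (card (PiE {..<n} F)) / of_nat (q ^ n)"
    unfolding pmf_leak[OF finite_vecs vecs_ne] setU card_vecs q_def by simp
  also have "of_nat (card (PiE {..<n} F)) = (\<Prod>j<n. Sf 0 j)"
    unfolding Sf_def by (simp add: card_PiE chi_0[OF prp w1 cardq])
  finally have eU: "complex_of_real (pmf (leak_dist n \<tau> (vecs n)) (map g [0..<n])) = (\<Prod>j<n. Sf 0 j) / of_nat (q ^ n)" .
  have "complex_of_real (pmf (leak_dist n \<tau> (additive_code n)) (map g [0..<n]) - pmf (leak_dist n \<tau> (vecs n)) (map g [0..<n]))
     = ((\<Sum>\<alpha>\<in>UNIV. \<Prod>j<n. Sf \<alpha> j) - (\<Prod>j<n. Sf 0 j)) / of_nat (q ^ n)"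
    unfolding of_real_diff eC eU by (simp add: diff_divide_distrib)
  also have "(\<Sum>\<alpha>\<in>UNIV. \<Prod>j<n. Sf \<alpha> j) - (\<Prod>j<n. Sf 0 j) = (\<Sum>\<alpha>\<in>UNIV-{0}. \<Prod>j<n. Sf \<alpha> j)"
    using sum.remove[of UNIV 0 "\<lambda>\<alpha>. \<Prod>j<n. Sf \<alpha> j"] by simp
  finally have ed: "complex_of_real (pmf (leak_dist n \<tau> (additive_code n)) (map g [0..<n]) - pmf (leak_dist n \<tau> (vecs n)) (map g [0..<n]))
     = (\<Sum>\<alpha>\<in>UNIV-{0}. \<Prod>j<n. Sf \<alpha> j) / of_nat (q ^ n)" .
  have "\<bar>pmf (leak_dist n \<tau> (additive_code n)) (map g [0..<n]) - pmf (leak_dist n \<tau> (vecs n)) (map g [0..<n])\<bar>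
     = cmod ((\<Sum>\<alpha>\<in>UNIV-{0}. \<Prod>j<n. Sf \<alpha> j) / of_nat (q ^ n))"
    by (subst ed[symmetric]) (simp only: norm_of_real)
  also have "\<dots> = cmod (\<Sum>\<alpha>\<in>UNIV-{0}. \<Prod>j<n. Sf \<alpha> j) / real (q ^ n)"
    by (simp add: norm_divide norm_power)
  also have "\<dots> \<le> (\<Sum>\<alpha>\<in>UNIV-{0}. cmod (\<Prod>j<n. Sf \<alpha> j)) / real (q ^ n)"
    by (intro divide_right_mono norm_sum) simp
  also have "\<dots> = (\<Sum>\<alpha>\<in>UNIV-{0}. \<Prod>j<n. cmod (Sf \<alpha> j)) / real (q ^ n)"
    by (simp add: prod_norm)
  finally show ?thesis unfolding Sf_def F_def q_def .
qed

end

lemma cmod_Arg: "cmod z = Re (z * cis (- Arg z))"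
proof (cases "z = 0")
  case True then show ?thesis by simp
next
  case False
  have "cis (- Arg z) = inverse (sgn z)" using cis_Arg[OF False] cis_inverse by metis
  then have "z * cis (- Arg z) = z / sgn z" by (simp add: divide_inverse)
  also have "sgn z = z / complex_of_real (cmod z)"
    by (simp add: sgn_div_norm divide_inverse scaleR_conv_of_real mult.commute)
  also have "z / (z / complex_of_real (cmod z)) = complex_of_real (cmod z)" using False by simp
  finally show ?thesis by simp
qed

lemma sum_mult_reindex:
  fixes \<alpha> :: "'a::{finite,field}"
  assumes "\<alpha> \<noteq> 0"
  shows "(\<Sum>a\<in>UNIV. f (\<alpha> * a)) = (\<Sum>a\<in>UNIV. f a)"
  by (rule sum.reindex_bij_witness[of _ "\<lambda>b. b / \<alpha>" "\<lambda>a. \<alpha> * a"]) (use assms in auto)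

context
  fixes p w n \<mu> :: nat and \<tau> :: "nat \<Rightarrow> 'a::{finite,field} \<Rightarrow> bool list"
  assumes prp: "prime p" and w1: "w \<ge> 1" and cardq: "CARD('a) = p ^ w"
    and n2: "n \<ge> 2" and mu1: "\<mu> \<ge> 1" and pbig: "2 ^ \<mu> < p"
    and lens: "\<forall>j<n. \<forall>a. length (\<tau> j a) = \<mu>"
begin

lemmas diff_bound' = diff_bound[OF prp w1 cardq n2 mu1 pbig lens]
lemmas p2' = p2[OF prp w1 cardq n2 mu1 pbig lens]
lemmas oddp' = oddp[OF prp w1 cardq n2 mu1 pbig lens]

definition BB :: "bool list set" where "BB = {xs. length xs = \<mu>}"

lemma finBB: "finite BB" unfolding BB_def using finite_lists_length_eq[of "UNIV::bool set" \<mu>] by simp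

lemma cardBB: "card BB = 2 ^ \<mu>" unfolding BB_def using card_lists_length_eq[of "UNIV::bool set" \<mu>] by simp

lemma tauBB: "j < n \<Longrightarrow> \<tau> j a \<in> BB" unfolding BB_def using lens by simp

definition Sf :: "'a \<Rightarrow> nat \<Rightarrow> bool list \<Rightarrow> complex" where
  "Sf \<alpha> j b = (\<Sum>a\<in>{a. \<tau> j a = b}. chi p w \<alpha> a)"

definition AA :: "'a \<Rightarrow> nat \<Rightarrow> real" where
  "AA \<alpha> j = (\<Sum>b\<in>BB. cmod (Sf \<alpha> j b)) / real (p ^ w)"

lemma AA_nonneg: "AA \<alpha> j \<ge> 0" unfolding AA_def by (simp add: sum_nonneg)

lemma q_pos: "real (p ^ w) > 0" using prp prime_gt_0_nat by simp

lemma sum_bound: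
  "(\<Sum>g\<in>PiE {..<n} (\<lambda>_. BB). \<bar>pmf (leak_dist n \<tau> (additive_code n)) (map g [0..<n]) - pmf (leak_dist n \<tau> (vecs n)) (map g [0..<n])\<bar>)
   \<le> (\<Sum>\<alpha>\<in>UNIV-{0::'a}. \<Prod>j<n. AA \<alpha> j)"
proof -
  have "(\<Sum>g\<in>PiE {..<n} (\<lambda>_. BB). \<bar>pmf (leak_dist n \<tau> (additive_code n)) (map g [0..<n]) - pmf (leak_dist n \<tau> (vecs n)) (map g [0..<n])\<bar>)
     \<le> (\<Sum>g\<in>PiE {..<n} (\<lambda>_. BB). (\<Sum>\<alpha>\<in>UNIV-{0::'a}. \<Prod>j<n. cmod (Sf \<alpha> j (g j))) / real ((p ^ w) ^ n))"
    by (intro sum_mono) (use diff_bound' in \<open>simp add: Sf_def\<close>)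
  also have "\<dots> = (\<Sum>\<alpha>\<in>UNIV-{0::'a}. \<Sum>g\<in>PiE {..<n} (\<lambda>_. BB). \<Prod>j<n. cmod (Sf \<alpha> j (g j))) / real ((p ^ w) ^ n)"
    by (simp only: sum_divide_distrib[symmetric] sum.swap[of _ "PiE {..<n} (\<lambda>_. BB)"])
  also have "\<dots> = (\<Sum>\<alpha>\<in>UNIV-{0::'a}. \<Prod>j<n. \<Sum>b\<in>BB. cmod (Sf \<alpha> j b)) / real ((p ^ w) ^ n)"
    using finBB by (subst prod_sum_PiE) auto
  also have "\<dots> = (\<Sum>\<alpha>\<in>UNIV-{0::'a}. \<Prod>j<n. AA \<alpha> j)"
  proof -
    have "(\<Prod>j<n. AA \<alpha> j) = (\<Prod>j<n. \<Sum>b\<in>BB. cmod (Sf \<alpha> j b)) / real ((p ^ w) ^ n)" for \<alpha>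
      unfolding AA_def prod_dividef by simp
    then show ?thesis by (simp add: sum_divide_distrib)
  qed
  finally show ?thesis .
qed


lemma AA_le:
  assumes a0: "\<alpha> \<noteq> 0" and j: "j < n"
  shows "AA \<alpha> j \<le> (2 ^ \<mu> * sin (pi / 2 ^ \<mu>)) / (real p * sin (pi / real p))"
proof -
  define \<phi> where "\<phi> b = Arg (Sf \<alpha> j b)" for b
  define G where "G k = Max ((\<lambda>b. cos (2*pi*real k/real p - \<phi> b)) ` BB)" for k :: nat
  have chi_re: "Re (chi p w \<alpha> a * cis (- \<phi> b)) = cos (2*pi*real (T p w (\<alpha> * a))/real p - \<phi> b)" for a b
    unfolding chi_def[OF prp w1 cardq] cis_mult by simp
  have img: "\<tau> j ` (UNIV::'a set) \<subseteq> BB" using tauBB[OF j] by auto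
  have "(\<Sum>b\<in>BB. cmod (Sf \<alpha> j b)) = (\<Sum>b\<in>BB. Re (Sf \<alpha> j b * cis (- \<phi> b)))"
    unfolding \<phi>_def using cmod_Arg by simp
  also have "\<dots> = (\<Sum>b\<in>BB. \<Sum>a\<in>{a\<in>UNIV. \<tau> j a = b}. cos (2*pi*real (T p w (\<alpha> * a))/real p - \<phi> (\<tau> j a)))"
    unfolding Sf_def sum_distrib_right Re_sum chi_re by (intro sum.cong refl) auto
  also have "\<dots> = (\<Sum>a\<in>UNIV. cos (2*pi*real (T p w (\<alpha> * a))/real p - \<phi> (\<tau> j a)))"
    by (rule sum.group[OF _ finBB img]) simp
  also have "\<dots> \<le> (\<Sum>a\<in>UNIV. G (T p w (\<alpha> * a)))"
    unfolding G_def by (intro sum_mono Max_ge) (use finBB tauBB[OF j] in auto)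
  also have "\<dots> = (\<Sum>a::'a\<in>UNIV. G (T p w a))"
    by (rule sum_mult_reindex[OF a0])
  also have "\<dots> = real (c0 TYPE('a) p w) * (\<Sum>k<p. G k)"
    by (rule sum_T[OF prp w1 cardq])
  also have "\<dots> \<le> real (c0 TYPE('a) p w) * (real (card BB) * sin (pi / real (card BB)) / sin (pi / real p))"
  proof (rule mult_left_mono)
    show "(\<Sum>k<p. G k) \<le> real (card BB) * sin (pi / real (card BB)) / sin (pi / real p)"
      unfolding G_def by (rule core_bound[OF oddp']) (use p2' finBB cardBB in auto)
  qed simp
  finally have le: "(\<Sum>b\<in>BB. cmod (Sf \<alpha> j b)) \<le> real (c0 TYPE('a) p w) * (real (card BB) * sin (pi / real (card BB)) / sin (pi / real p))" .
  have qc: "real (p ^ w) = real p * real (c0 TYPE('a) p w)" using c0_mult[OF prp w1 cardq] by (metis of_nat_mult)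
  have cpos: "real (c0 TYPE('a) p w) > 0" using qc q_pos by (metis mult_zero_right less_irrefl of_nat_0_less_iff neq0_conv of_nat_0 zero_less_mult_iff)
  have "AA \<alpha> j \<le> real (c0 TYPE('a) p w) * (real (card BB) * sin (pi / real (card BB)) / sin (pi / real p)) / (real p * real (c0 TYPE('a) p w))"
    unfolding AA_def qc[symmetric] using le q_pos by (intro divide_right_mono) auto
  also have "\<dots> = real (card BB) * sin (pi / real (card BB)) / (real p * sin (pi / real p))"
    using cpos by (simp add: field_simps)
  finally show ?thesis unfolding cardBB by simp
qed

lemma AA_sq:
  assumes j: "j < n"
  shows "(\<Sum>\<alpha>\<in>UNIV. (AA \<alpha> j)^2) \<le> 2 ^ \<mu>"
proof -
  have img: "\<tau> j ` (UNIV::'a set) \<subseteq> BB" using tauBB[OF j] by auto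
  have "(AA \<alpha> j)^2 \<le> (\<Sum>b\<in>BB. (cmod (Sf \<alpha> j b))^2) * real (card BB) / (real (p ^ w))^2" for \<alpha>
    unfolding AA_def power_divide by (intro divide_right_mono sum_squared_le_sum_of_squares) simp
  then have "(\<Sum>\<alpha>\<in>UNIV. (AA \<alpha> j)^2) \<le> (\<Sum>\<alpha>\<in>UNIV. (\<Sum>b\<in>BB. (cmod (Sf \<alpha> j b))^2) * real (card BB) / (real (p ^ w))^2)"
    by (intro sum_mono) auto
  also have "\<dots> = (\<Sum>b\<in>BB. \<Sum>\<alpha>\<in>UNIV. (cmod (Sf \<alpha> j b))^2) * real (card BB) / (real (p ^ w))^2"
    by (simp only: sum_divide_distrib[symmetric] sum_distrib_right[symmetric] sum.swap[of _ UNIV])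
  also have "(\<Sum>b\<in>BB. \<Sum>\<alpha>\<in>UNIV. (cmod (Sf \<alpha> j b))^2) = (\<Sum>b\<in>BB. real (p ^ w) * real (card {a. \<tau> j a = b}))"
    unfolding Sf_def using parseval[OF prp w1 cardq p2'] by simp
  also have "\<dots> = real (p ^ w) * real (\<Sum>b\<in>BB. card {a::'a\<in>UNIV. \<tau> j a = b})"
    by (simp add: sum_distrib_left)
  also have "(\<Sum>b\<in>BB. card {a::'a\<in>UNIV. \<tau> j a = b}) = p ^ w"
  proof -
    have "(\<Sum>b\<in>BB. card {a::'a\<in>UNIV. \<tau> j a = b}) = (\<Sum>b\<in>BB. \<Sum>a\<in>{a::'a\<in>UNIV. \<tau> j a = b}. 1)" by simp
    also have "\<dots> = (\<Sum>a::'a\<in>UNIV. 1)" by (rule sum.group[OF _ finBB img]) simp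
    finally show ?thesis using cardq by simp
  qed
  finally have "(\<Sum>\<alpha>\<in>UNIV. (AA \<alpha> j)^2) \<le> real (p ^ w) * real (p ^ w) * real (card BB) / (real (p ^ w))^2" .
  also have "\<dots> = real (card BB)" using q_pos by (simp add: power2_eq_square)
  finally show ?thesis unfolding cardBB by simp
qed


lemma final_bound:
  "stat_dist (leak_dist n \<tau> (additive_code n)) (leak_dist n \<tau> (vecs n))
     \<le> (1/2) * 2 ^ \<mu> * ((2 ^ \<mu> * sin (pi / 2 ^ \<mu>)) / (real p * sin (pi / real p))) ^ (n - 2)"
proof -
  define c :: real where "c = (2 ^ \<mu> * sin (pi / 2 ^ \<mu>)) / (real p * sin (pi / real p))"
  have c_nonneg: "c \<ge> 0"
  proof -
    have "sin (pi / 2 ^ \<mu>) \<ge> 0" by (rule sin_ge_zero) (auto simp: field_simps)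
    moreover have "sin (pi / real p) \<ge> 0" using p2' by (intro sin_ge_zero) (auto simp: field_simps)
    ultimately show ?thesis unfolding c_def by simp
  qed
  have sd: "stat_dist (leak_dist n \<tau> (additive_code n)) (leak_dist n \<tau> (vecs n)) =
     (1/2) * (\<Sum>g\<in>PiE {..<n} (\<lambda>_. BB). \<bar>pmf (leak_dist n \<tau> (additive_code n)) (map g [0..<n]) - pmf (leak_dist n \<tau> (vecs n)) (map g [0..<n])\<bar>)"
    by (rule stat_dist_finite) (use code_sub[OF prp w1 cardq n2 mu1 pbig lens] code_ne[OF prp w1 cardq n2 mu1 pbig lens]
        vecs_ne[OF prp w1 cardq n2 mu1 pbig lens] finBB tauBB in auto)
  have split: "(\<Prod>j<n. AA \<alpha> j) = AA \<alpha> 0 * AA \<alpha> 1 * (\<Prod>j\<in>{2..<n}. AA \<alpha> j)" for \<alpha>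
  proof -
    have "(\<Prod>j<n. AA \<alpha> j) = (\<Prod>j\<in>{0..<2}. AA \<alpha> j) * (\<Prod>j\<in>{2..<n}. AA \<alpha> j)"
      using prod.atLeastLessThan_concat[of 0 2 n "AA \<alpha>"] n2 by (simp add: atLeast0LessThan)
    also have "(\<Prod>j\<in>{0..<2}. AA \<alpha> j) = AA \<alpha> 0 * AA \<alpha> 1" by (simp add: numeral_2_eq_2)
    finally show ?thesis .
  qed
  have tail: "(\<Prod>j\<in>{2..<n}. AA \<alpha> j) \<le> c ^ (n - 2)" if "\<alpha> \<noteq> 0" for \<alpha>
  proof -
    have "(\<Prod>j\<in>{2..<n}. AA \<alpha> j) \<le> (\<Prod>j\<in>{2..<n}. c)"
      by (intro prod_mono) (use AA_nonneg AA_le[OF that] in \<open>auto simp: c_def\<close>)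
    then show ?thesis by simp
  qed
  have "(\<Sum>\<alpha>\<in>UNIV-{0::'a}. \<Prod>j<n. AA \<alpha> j) \<le> (\<Sum>\<alpha>\<in>UNIV-{0::'a}. AA \<alpha> 0 * AA \<alpha> 1 * c ^ (n - 2))"
    unfolding split by (intro sum_mono mult_left_mono tail) (auto intro: mult_nonneg_nonneg AA_nonneg)
  also have "\<dots> = c ^ (n - 2) * (\<Sum>\<alpha>\<in>UNIV-{0::'a}. AA \<alpha> 0 * AA \<alpha> 1)"
    by (simp add: sum_distrib_left mult_ac)
  also have "(\<Sum>\<alpha>\<in>UNIV-{0::'a}. AA \<alpha> 0 * AA \<alpha> 1) \<le> (\<Sum>\<alpha>\<in>UNIV. AA \<alpha> 0 * AA \<alpha> 1)"
    by (intro sum_mono2) (auto intro: mult_nonneg_nonneg AA_nonneg)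
  also have "\<dots> \<le> (\<Sum>\<alpha>\<in>UNIV. ((AA \<alpha> 0)^2 + (AA \<alpha> 1)^2) / 2)"
  proof (intro sum_mono)
    fix \<alpha> :: 'a
    have "0 \<le> (AA \<alpha> 0 - AA \<alpha> 1)^2" by simp
    then show "AA \<alpha> 0 * AA \<alpha> 1 \<le> ((AA \<alpha> 0)^2 + (AA \<alpha> 1)^2) / 2" by (simp add: power2_eq_square algebra_simps)
  qed
  also have "\<dots> = ((\<Sum>\<alpha>\<in>UNIV. (AA \<alpha> 0)^2) + (\<Sum>\<alpha>\<in>UNIV. (AA \<alpha> 1)^2)) / 2"
    by (simp add: sum.distrib sum_divide_distrib[symmetric])
  also have "\<dots> \<le> (2 ^ \<mu> + 2 ^ \<mu>) / 2"
    using AA_sq[of 0] AA_sq[of 1] n2 by (intro divide_right_mono add_mono) auto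
  finally have main: "(\<Sum>\<alpha>\<in>UNIV-{0::'a}. \<Prod>j<n. AA \<alpha> j) \<le> c ^ (n - 2) * 2 ^ \<mu>"
    using c_nonneg by (simp add: mult_left_mono)
  show ?thesis unfolding sd using sum_bound main unfolding c_def by (simp add: mult_ac)
qed

end

theorem corollary5p2:
  fixes p w n \<mu> :: nat
    and \<tau> :: "nat \<Rightarrow> 'a::{finite,field} \<Rightarrow> bool list"
  assumes "prime p" and "w \<ge> 1" and "CARD('a) = p ^ w"
    and "n \<ge> 2" and "\<mu> \<ge> 1" and "2 ^ \<mu> < p"
    and "\<forall>j<n. \<forall>a. length (\<tau> j a) = \<mu>"
  shows "stat_dist (leak_dist n \<tau> (additive_code n)) (leak_dist n \<tau> (vecs n))
         \<le> (1/2) * 2 ^ \<mu> *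
           ((2 ^ \<mu> * sin (pi / 2 ^ \<mu>)) / (real p * sin (pi / real p))) ^ (n - 2)"
  by (rule final_bound[OF assms])

end
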